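(* Let $N\ge 2$, $1\le m\le N$ and $1\le k\le N$ be integers. Consider a uniformly random ranking of $N$ items exactly $m$ of which are relevant, i.e. the set of positions occupied by the relevant items is a uniformly random $m$-element subset of $\{1,\dots,N\}$. For $j=1,\dots,N$ let $I_j\in\{0,1\}$ equal $1$ iff the item at position $j$ is relevant, let $P@i=\frac1i\sum_{j=1}^i I_j$, and let $$AP@k=\frac{1}{\min(m,k)}\sum_{i=1}^k P@i\cdot I_i .$$ Then $$\operatorname{E}(AP@k)=\frac{m}{N\cdot\min(k,m)}\left(\frac{m-1}{N-1}\,k+\frac{N-m}{N-1}\,H_k\right),$$ where $H_k=\sum_{i=1}^k\frac1i$.
   Context: This expectation is called $MAP_{WOR}@k$ in the paper (offline evaluation, sampling without replacement). $H_k$ is the $k$-th harmonic number. *)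

theory Defs
  imports "HOL-Probability.Probability" "HOL-Analysis.Harmonic_Numbers"
begin

text \<open>A ranking is represented by the set S of positions (in {1..N}) occupied by relevant items.\<close>

definition rel_ind :: "nat set \<Rightarrow> nat \<Rightarrow> real" where
  "rel_ind S j = (if j \<in> S then 1 else 0)"

definition prec_at :: "nat set \<Rightarrow> nat \<Rightarrow> real" where
  "prec_at S i = (1 / real i) * (\<Sum>j=1..i. rel_ind S j)"

definition avg_prec_at :: "nat \<Rightarrow> nat set \<Rightarrow> nat \<Rightarrow> real" where
  "avg_prec_at m S k = (1 / real (min m k)) * (\<Sum>i=1..k. prec_at S i * rel_ind S i)"

definition random_ranking :: "nat \<Rightarrow> nat \<Rightarrow> nat set pmf" where
  "random_ranking N m = pmf_of_set {S. S \<subseteq> {1..N} \<and> card S = m}"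

end

theory Submission
  imports Defs
begin

lemma count_sup:
  assumes "finite A" "D \<subseteq> A" "card D \<le> m"
  shows "card {S. S \<subseteq> A \<and> card S = m \<and> D \<subseteq> S} = (card A - card D) choose (m - card D)"
proof -
  have fD: "finite D" using assms finite_subset by blast
  have "bij_betw (\<lambda>T. T \<union> D) {T. T \<subseteq> A - D \<and> card T = m - card D} {S. S \<subseteq> A \<and> card S = m \<and> D \<subseteq> S}"
  proof (rule bij_betw_byWitness[where f'="\<lambda>S. S - D"])
    show "\<forall>a\<in>{T. T \<subseteq> A - D \<and> card T = m - card D}. a \<union> D - D = a" by auto
    show "\<forall>a'\<in>{S. S \<subseteq> A \<and> card S = m \<and> D \<subseteq> S}. a' - D \<union> D = a'" by auto
    show "(\<lambda>T. T \<union> D) ` {T. T \<subseteq> A - D \<and> card T = m - card D} \<subseteq> {S. S \<subseteq> A \<and> card S = m \<and> D \<subseteq> S}"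
    proof (rule image_subsetI)
      fix T assume "T \<in> {T. T \<subseteq> A - D \<and> card T = m - card D}"
      then have T: "T \<subseteq> A - D" "card T = m - card D" by auto
      have "finite T" using T assms finite_subset by blast
      have "card (T \<union> D) = card T + card D"
        using T \<open>finite T\<close> fD by (subst card_Un_disjoint) auto
      then show "T \<union> D \<in> {S. S \<subseteq> A \<and> card S = m \<and> D \<subseteq> S}" using T assms by auto
    qed
    show "(\<lambda>S. S - D) ` {S. S \<subseteq> A \<and> card S = m \<and> D \<subseteq> S} \<subseteq> {T. T \<subseteq> A - D \<and> card T = m - card D}"
      using fD by (auto simp: card_Diff_subset)
  qed
  then have "card {S. S \<subseteq> A \<and> card S = m \<and> D \<subseteq> S} = card {T. T \<subseteq> A - D \<and> card T = m - card D}"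
    by (simp add: bij_betw_same_card)
  also have "\<dots> = card (A - D) choose (m - card D)"
    using assms by (simp add: n_subsets)
  also have "card (A - D) = card A - card D" using assms fD by (simp add: card_Diff_subset)
  finally show ?thesis .
qed

lemma ring_helper:
  fixes x a b kk H :: real
  shows "x * (kk * (a * b) + (a - a * b) * H) = x * a * (b * kk + (1 - b) * H)"
  by (simp add: algebra_simps)

theorem theorem1:
  fixes N m k :: nat
  assumes "N \<ge> 2" and "1 \<le> m" and "m \<le> N" and "1 \<le> k" and "k \<le> N"
  shows "measure_pmf.expectation (random_ranking N m) (\<lambda>S. avg_prec_at m S k)
    = real m / (real N * real (min k m)) *
      ((real m - 1) / (real N - 1) * real k + (real N - real m) / (real N - 1) * (harm k :: real))"
proof -
  define U where "U = {S. S \<subseteq> {1..N} \<and> card S = m}"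
  have finU: "finite U" unfolding U_def by (rule finite_subset[of _ "Pow {1..N}"]) auto
  have cardU: "card U = N choose m" unfolding U_def by (simp add: n_subsets)
  have neU: "U \<noteq> {}" using cardU assms by (metis card.empty zero_less_binomial_iff not_less le_refl gr_implies_not0)
  define c1 where "c1 = real ((N - 1) choose (m - 1))"
  define c2 where "c2 = (if m \<ge> 2 then real ((N - 2) choose (m - 2)) else 0)"
  have C1: "real (card {S\<in>U. i \<in> S}) = c1" if "i \<in> {1..N}" for i
  proof -
    have "{S\<in>U. i \<in> S} = {S. S \<subseteq> {1..N} \<and> card S = m \<and> {i} \<subseteq> S}" unfolding U_def by auto
    moreover have "{i} \<subseteq> {1..N}" using that by auto
    ultimately show ?thesis using count_sup[of "{1..N}" "{i}" m] assms unfolding c1_def by simp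
  qed
  have C2: "real (card {S\<in>U. j \<in> S \<and> i \<in> S}) = c2" if "i \<in> {1..N}" "j \<in> {1..N}" "j \<noteq> i" for i j
  proof (cases "m \<ge> 2")
    case True
    have "{S\<in>U. j \<in> S \<and> i \<in> S} = {S. S \<subseteq> {1..N} \<and> card S = m \<and> {i,j} \<subseteq> S}" unfolding U_def by auto
    moreover have "card {i,j} = 2" using that by auto
    moreover have "{i,j} \<subseteq> {1..N}" using that by auto
    ultimately show ?thesis using count_sup[of "{1..N}" "{i,j}" m] True unfolding c2_def by simp
  next
    case False
    then have m1: "m = 1" using assms by auto
    have e: "{S\<in>U. j \<in> S \<and> i \<in> S} = {}"
    proof (rule ccontr)
      assume "{S\<in>U. j \<in> S \<and> i \<in> S} \<noteq> {}"
      then obtain S where S: "S \<in> U" "j \<in> S" "i \<in> S" by auto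
      then have "card S = 1" using m1 unfolding U_def by auto
      then show False using S that by (auto simp: card_Suc_eq)
    qed
    show ?thesis using False unfolding c2_def e by simp
  qed
  have inner: "(\<Sum>S\<in>U. rel_ind S j * rel_ind S i) = real (card {S\<in>U. j \<in> S \<and> i \<in> S})" for i j
  proof -
    have "(\<Sum>S\<in>U. rel_ind S j * rel_ind S i) = (\<Sum>S\<in>U. if j \<in> S \<and> i \<in> S then 1 else 0)"
      by (intro sum.cong) (auto simp: rel_ind_def)
    also have "\<dots> = (\<Sum>S\<in>{S\<in>U. j \<in> S \<and> i \<in> S}. 1)" by (subst sum.inter_filter[OF finU]) (rule refl)
    also have "\<dots> = real (card {S\<in>U. j \<in> S \<and> i \<in> S})" by simp
    finally show ?thesis .
  qed
  have row: "(\<Sum>j=1..i. (\<Sum>S\<in>U. rel_ind S j * rel_ind S i)) = c1 + (real i - 1) * c2"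
    if "i \<in> {1..k}" for i
  proof -
    have iN: "i \<in> {1..N}" using that assms by auto
    have "{1..i} = insert i {1..<i}" using that by auto
    then have "(\<Sum>j=1..i. (\<Sum>S\<in>U. rel_ind S j * rel_ind S i)) =
       (\<Sum>S\<in>U. rel_ind S i * rel_ind S i) + (\<Sum>j=1..<i. (\<Sum>S\<in>U. rel_ind S j * rel_ind S i))"
      by simp
    also have "(\<Sum>S\<in>U. rel_ind S i * rel_ind S i) = c1"
      using inner[of i i] C1[OF iN] by simp
    also have "(\<Sum>j=1..<i. (\<Sum>S\<in>U. rel_ind S j * rel_ind S i)) = (\<Sum>j=1..<i. c2)"
      using inner C2 iN that assms by (intro sum.cong) auto
    also have "\<dots> = (real i - 1) * c2" using that by (simp add: of_nat_diff)
    finally show ?thesis .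
  qed
  have "(\<Sum>S\<in>U. avg_prec_at m S k) =
     (1 / real (min m k)) * (\<Sum>i=1..k. (1 / real i) * (\<Sum>j=1..i. (\<Sum>S\<in>U. rel_ind S j * rel_ind S i)))"
    unfolding avg_prec_at_def prec_at_def
    by (simp add: sum_distrib_left sum_distrib_right mult.assoc sum.swap[of _ U])
  also have "\<dots> = (1 / real (min m k)) * (\<Sum>i=1..k. (1 / real i) * (c1 + (real i - 1) * c2))"
    using row by simp
  also have "(\<Sum>i=1..k. (1 / real i) * (c1 + (real i - 1) * c2)) = (\<Sum>i=1..k. c2 + (c1 - c2) * inverse (real i))"
    by (intro sum.cong) (auto simp: field_simps)
  also have "\<dots> = real k * c2 + (c1 - c2) * harm k"
    by (simp add: sum.distrib harm_def sum_distrib_left)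
  finally have sumU: "(\<Sum>S\<in>U. avg_prec_at m S k) = (1 / real (min m k)) * (real k * c2 + (c1 - c2) * harm k)" .
  have n1: "N * ((N - 1) choose (m - 1)) = (N choose m) * m"
    using Suc_times_binomial_eq[of "N - 1" "m - 1"] assms by simp
  have n1r: "real N * c1 = real (N choose m) * real m"
    unfolding c1_def using n1 by (metis of_nat_mult)
  have cpos: "real (N choose m) > 0" using assms by simp
  have r1: "c1 / real (card U) = real m / real N"
    unfolding cardU using n1r cpos assms by (simp add: field_simps)
  have n2r: "(real N - 1) * c2 = c1 * (real m - 1)"
  proof (cases "m \<ge> 2")
    case True
    have "(N - 1) * ((N - 2) choose (m - 2)) = ((N - 1) choose (m - 1)) * (m - 1)"
    proof -
      obtain m' where m': "m = Suc (Suc m')" using True by (metis add_2_eq_Suc le_Suc_ex)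
      obtain N' where N': "N = Suc (Suc N')" using assms by (metis add_2_eq_Suc le_Suc_ex)
      show ?thesis using Suc_times_binomial_eq[of N' m'] unfolding m' N' by simp
    qed
    note eq = this
    have c2e: "c2 = real ((N - 2) choose (m - 2))" using True c2_def by simp
    have "real (N - 1) * c2 = c1 * real (m - 1)"
      unfolding c2e c1_def by (simp only: of_nat_mult[symmetric] eq)
    then show ?thesis using True assms by (simp add: of_nat_diff)
  next
    case False
    then have "m = 1" using assms by auto
    then show ?thesis unfolding c2_def by simp
  qed
  have r2: "c2 / real (card U) = real m / real N * ((real m - 1) / (real N - 1))"
  proof -
    have "real N - 1 > 0" using assms by simp
    then have "c2 = c1 * (real m - 1) / (real N - 1)" using n2r by (simp add: field_simps)
    then have "c2 / real (card U) = (c1 / real (card U)) * ((real m - 1) / (real N - 1))" by simp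
    then show ?thesis unfolding r1 .
  qed
  have "measure_pmf.expectation (random_ranking N m) (\<lambda>S. avg_prec_at m S k) = (\<Sum>S\<in>U. avg_prec_at m S k) / real (card U)"
    unfolding random_ranking_def U_def[symmetric] using finU neU by (simp add: integral_pmf_of_set)
  also have "\<dots> = (1 / real (min m k)) * (real k * (c2 / real (card U)) + (c1 / real (card U) - c2 / real (card U)) * harm k)"
  proof -
    have "real (card U) > 0" using cpos cardU by simp
    moreover have "real (min m k) > 0" using assms by simp
    ultimately show ?thesis unfolding sumU by (simp add: field_simps)
  qed
  also have "\<dots> = real m / (real N * real (min k m)) *
      ((real m - 1) / (real N - 1) * real k + (real N - real m) / (real N - 1) * (harm k :: real))"
  proof -
    have hb: "1 - (real m - 1) / (real N - 1) = (real N - real m) / (real N - 1)"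
      using assms by (simp add: field_simps)
    have "(1 / real (min m k)) * (real k * (real m / real N * ((real m - 1) / (real N - 1))) +
        (real m / real N - real m / real N * ((real m - 1) / (real N - 1))) * harm k)
      = (1 / real (min m k)) * (real m / real N) * ((real m - 1) / (real N - 1) * real k
        + (1 - (real m - 1) / (real N - 1)) * harm k)"
      by (rule ring_helper)
    also have "\<dots> = real m / (real N * real (min k m)) *
      ((real m - 1) / (real N - 1) * real k + (real N - real m) / (real N - 1) * (harm k :: real))"
      unfolding hb by (simp add: min.commute)
    finally show ?thesis unfolding r1 r2 .
  qed
  finally show ?thesis .
qed

end
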